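(* Let $q\in(0,1]$. Consider the linear semi-infinite problem described in the context, and let $(\bar c,\bar b)\in\mathbb{R}^n\times\mathcal{C}(T,\mathbb{R})$ with $\mathcal{S}(\bar c,\bar b)=\{\bar x\}$, and assume $P(\bar c,\bar b)$ satisfies the Slater condition. Then $$\operatorname{clm}_q\mathcal{S}((\bar c,\bar b),\bar x)\le \operatorname{clm}_q\mathcal{S}_{\bar c}(\bar b,\bar x)\le \inf_{D\in\mathcal{K}_{\bar b}(\bar x)}\ \liminf_{x\to\bar x,\ f_D(x)>0} f_D(x)^{q-1}\, d(0,\partial f_D(x)).$$
   Context: Setting: $T$ is a compact subset of a metric space $Z$ with $T\neq Z$; $t\mapsto a_t\in\mathbb{R}^n$ is continuous on $T$; $g_t(x)=\langle a_t,x\rangle$ and $f\equiv0$. $\mathcal{C}(T,\mathbb{R})$ is the space of continuous $b:T\to\mathbb{R}$, $t\mapsto b_t$, with $\|b\|_\infty=\max_t|b_t|$. For $(c,b)\in\mathbb{R}^n\times\mathcal{C}(T,\mathbb{R})$, $P(c,b)$: minimize $\langle c,x\rangle$ subject to $\langle a_t,x\rangle\le b_t$, $t\in T$. Parameter norm $\|(c,b)\|=\max\{\|c\|,\|b\|_\infty\}$ (Euclidean norm on $\mathbb{R}^n$). $\mathcal{S}(c,b)$ is the optimal solution set, $\mathcal{S}_c(b):=\mathcal{S}(c,b)$. Slater condition: there is $\hat x$ with $g_t(\hat x)<b_t$ for all $t$. Active set $T_b(x)=\{t\in T: g_t(x)=b_t\}$. For a set-valued $S:Y\rightrightarrows X$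 between metric spaces and $(\bar y,\bar x)\in\operatorname{gph}S$, the $q$-order calmness modulus is $\operatorname{clm}_q S(\bar y,\bar x):=\liminf_{y\to\bar y,\ x\to\bar x,\ x\in S(y)} d(y,\bar y)^q/d(x,S(\bar y))$. $\mathcal{K}_{\bar b}(\bar x)$ is the family of sets $D\subset T_{\bar b}(\bar x)$ with $|D|\le n$ and $-(u+\bar c)\in\operatorname{cone}\{\partial g_t(\bar x): t\in D\}$ for some $u\in\partial f(\bar x)$, where cone denotes the convex conical hull, always containing $0_n$ (so $\operatorname{cone}(\emptyset)=\{0_n\}$), and $\partial$ is the convex subdifferential. For $D\in\mathcal{K}_{\bar b}(\bar x)$, $f_D(x):=\sup\{g_t(x)-\bar b_t,\ t\in T\setminus D;\ |g_t(x)-\bar b_t|,\ t\in D\}$. $d(0,A)=\inf_{a\in A}\|a\|$. *)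

theory Defs
  imports "HOL-Analysis.Analysis"
begin

definition subdiff :: "('a::real_inner \<Rightarrow> real) \<Rightarrow> 'a \<Rightarrow> 'a set" where
  "subdiff f x = {u. \<forall>y. f x + inner u (y - x) \<le> f y}"

text \<open>d(0,A) = inf of norms (+infinity for the empty set).\<close>
definition dist0 :: "'a::real_normed_vector set \<Rightarrow> ereal" where
  "dist0 A = (INF a\<in>A. ereal (norm a))"

definition calm_ratio :: "real \<Rightarrow> real \<Rightarrow> ereal" where
  "calm_ratio a d = (if d = 0 then \<infinity> else ereal (a / d))"

text \<open>q-order calmness modulus of S : Y \<rightrightarrows> X at (yb,xb); the metric on Y is given
  explicitly by dY, Y the underlying set; the liminf is written out as sup over delta>0
  of the inf over the delta-neighbourhood (points of the graph).\<close>
definition clm :: "real \<Rightarrow> ('y \<Rightarrow> 'y \<Rightarrow> real) \<Rightarrow> 'y set \<Rightarrow> ('y \<Rightarrow> 'x::metric_space set)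
                    \<Rightarrow> 'y \<Rightarrow> 'x \<Rightarrow> ereal" where
  "clm q dY Y S yb xb =
     (SUP \<delta>\<in>{0<..}. INF p\<in>{(y,x). y \<in> Y \<and> x \<in> S y \<and> dY y yb < \<delta> \<and> dist x xb < \<delta>}.
        calm_ratio (dY (fst p) yb powr q) (infdist (snd p) (S yb)))"

definition supdist :: "'z set \<Rightarrow> ('z \<Rightarrow> real) \<Rightarrow> ('z \<Rightarrow> real) \<Rightarrow> real" where
  "supdist T b b' = (if T = {} then 0 else Sup ((\<lambda>t. \<bar>b t - b' t\<bar>) ` T))"

definition CT :: "'z::topological_space set \<Rightarrow> ('z \<Rightarrow> real) set" where
  "CT T = {b. continuous_on T b}"

definition ParSp :: "'z::topological_space set \<Rightarrow> (('a::real_normed_vector) \<times> ('z \<Rightarrow> real)) set" where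
  "ParSp T = {(c,b). continuous_on T b}"

definition pardist :: "'z set \<Rightarrow> ('a::real_normed_vector \<times> ('z \<Rightarrow> real))
                        \<Rightarrow> ('a \<times> ('z \<Rightarrow> real)) \<Rightarrow> real" where
  "pardist T p p' = max (norm (fst p - fst p')) (supdist T (snd p) (snd p'))"

definition feas :: "'z set \<Rightarrow> ('z \<Rightarrow> 'a::real_inner) \<Rightarrow> ('z \<Rightarrow> real) \<Rightarrow> 'a set" where
  "feas T a b = {x. \<forall>t\<in>T. inner (a t) x \<le> b t}"

definition optS :: "'z set \<Rightarrow> ('z \<Rightarrow> 'a::real_inner) \<Rightarrow> 'a \<Rightarrow> ('z \<Rightarrow> real) \<Rightarrow> 'a set" where
  "optS T a c b = {x \<in> feas T a b. \<forall>y\<in>feas T a b. inner c x \<le> inner c y}"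

definition slater :: "'z set \<Rightarrow> ('z \<Rightarrow> 'a::real_inner) \<Rightarrow> ('z \<Rightarrow> real) \<Rightarrow> bool" where
  "slater T a b = (\<exists>x. \<forall>t\<in>T. inner (a t) x < b t)"

definition active :: "'z set \<Rightarrow> ('z \<Rightarrow> 'a \<Rightarrow> real) \<Rightarrow> ('z \<Rightarrow> real) \<Rightarrow> 'a \<Rightarrow> 'z set" where
  "active T g b x = {t \<in> T. g t x = b t}"

definition Kfam :: "'z set \<Rightarrow> ('z \<Rightarrow> real^'n \<Rightarrow> real) \<Rightarrow> (real^'n \<Rightarrow> real) \<Rightarrow> real^'n
                     \<Rightarrow> ('z \<Rightarrow> real) \<Rightarrow> real^'n \<Rightarrow> 'z set set" where
  "Kfam T g f c b x = {D. D \<subseteq> active T g b x \<and> finite D \<and> card D \<le> CARD('n) \<and>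
      (\<exists>u\<in>subdiff f x. - (u + c) \<in> convex_cone hull (\<Union>t\<in>D. subdiff (g t) x))}"

definition fD :: "'z set \<Rightarrow> ('z \<Rightarrow> 'a \<Rightarrow> real) \<Rightarrow> ('z \<Rightarrow> real) \<Rightarrow> 'z set \<Rightarrow> 'a \<Rightarrow> real" where
  "fD T g b D x = Sup ({g t x - b t | t. t \<in> T - D} \<union> {\<bar>g t x - b t\<bar> | t. t \<in> D})"

end

theory Submission
  imports Defs
begin

lemma supdist_nonneg:
  assumes "compact T" "continuous_on T b" "continuous_on T b'"
  shows "0 \<le> supdist T b b'"
proof (cases "T = {}")
  case True then show ?thesis by (simp add: supdist_def)
next
  case False
  then obtain t where t: "t \<in> T" by auto
  have c: "continuous_on T (\<lambda>t. \<bar>b t - b' t\<bar>)"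
    by (intro continuous_intros assms)
  have "compact ((\<lambda>t. \<bar>b t - b' t\<bar>) ` T)" using compact_continuous_image[OF c assms(1)] .
  then have "bdd_above ((\<lambda>t. \<bar>b t - b' t\<bar>) ` T)" by (simp add: bounded_imp_bdd_above compact_imp_bounded)
  then have "\<bar>b t - b' t\<bar> \<le> Sup ((\<lambda>t. \<bar>b t - b' t\<bar>) ` T)" using t by (simp add: cSup_upper)
  then show ?thesis using False by (simp add: supdist_def)
qed

lemma supdist_le:
  assumes "T \<noteq> {}" "\<And>t. t \<in> T \<Longrightarrow> \<bar>b t - b' t\<bar> \<le> \<alpha>"
  shows "supdist T b b' \<le> \<alpha>"
  using assms by (auto simp: supdist_def intro!: cSup_least)

lemma subdiff_linear:
  assumes "u \<in> subdiff (\<lambda>x. inner v x) x"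
  shows "u = v"
proof -
  have "inner v x + inner u ((x + (u - v)) - x) \<le> inner v (x + (u - v))"
    using assms unfolding subdiff_def by blast
  then have "inner (u - v) (u - v) \<le> 0" by (simp add: inner_simps algebra_simps)
  then show ?thesis by (meson eq_iff_diff_eq_0 inner_gt_zero_iff not_le)
qed

lemma kkt:
  assumes "- c \<in> convex_cone hull (a ` D)" "x \<in> feas T a b" "D \<subseteq> T"
    "\<And>t. t \<in> D \<Longrightarrow> inner (a t) x = b t"
  shows "x \<in> optS T a c b"
proof -
  let ?C = "{v. \<forall>y\<in>feas T a b. inner v y \<le> inner v x}"
  have cc: "convex_cone ?C"
    unfolding convex_cone_iff
  proof (intro conjI ballI allI impI)
    show "0 \<in> ?C" by simp
  next
    fix v w assume "v \<in> ?C" "w \<in> ?C"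
    then show "v + w \<in> ?C" by (auto simp: inner_add_left intro: add_mono)
  next
    fix v and k::real assume "v \<in> ?C" "0 \<le> k"
    then show "k *\<^sub>R v \<in> ?C" by (auto intro: mult_left_mono)
  qed
  have "a ` D \<subseteq> ?C"
    using assms(3,4) by (auto simp: feas_def)
  then have "convex_cone hull (a ` D) \<subseteq> ?C"
    using cc by (simp add: hull_minimal)
  then have "- c \<in> ?C" using assms(1) by blast
  then show ?thesis using assms(2) unfolding optS_def by auto
qed


lemma T_nonempty:
  fixes a :: "'z \<Rightarrow> real^'n"
  assumes "optS T a cb bb = {xb}"
  shows "T \<noteq> {}"
proof
  assume T: "T = {}"
  then have F: "feas T a bb = UNIV" by (simp add: feas_def)
  have xb: "\<forall>y. inner cb xb \<le> inner cb y" using assms F unfolding optS_def by auto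
  show False
  proof (cases "cb = 0")
    case True
    then have "xb + 1 \<in> optS T a cb bb" using F by (simp add: optS_def)
    then show False using assms by simp
  next
    case False
    have "inner cb xb \<le> inner cb (xb - cb)" using xb by blast
    then have "inner cb cb \<le> 0" by (simp add: inner_diff_right)
    then show False using False by (metis inner_gt_zero_iff not_le)
  qed
qed

lemma fD_bounds:
  fixes a :: "'z::metric_space \<Rightarrow> real^'n"
  assumes "compact T" "continuous_on T a" "continuous_on T bb" "finite D" "D \<subseteq> T"
  shows "\<And>t. t \<in> T - D \<Longrightarrow> inner (a t) x - bb t \<le> fD T (\<lambda>t x. inner (a t) x) bb D x"
    and "\<And>t. t \<in> D \<Longrightarrow> \<bar>inner (a t) x - bb t\<bar> \<le> fD T (\<lambda>t x. inner (a t) x) bb D x"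
proof -
  let ?S = "{inner (a t) x - bb t | t. t \<in> T - D} \<union> {\<bar>inner (a t) x - bb t\<bar> | t. t \<in> D}"
  have c: "continuous_on T (\<lambda>t. inner (a t) x - bb t)"
    by (intro continuous_intros assms)
  have "compact ((\<lambda>t. inner (a t) x - bb t) ` T)" using compact_continuous_image[OF c assms(1)] .
  then have b1: "bdd_above ((\<lambda>t. inner (a t) x - bb t) ` T)"
    by (simp add: bounded_imp_bdd_above compact_imp_bounded)
  have "{inner (a t) x - bb t | t. t \<in> T - D} \<subseteq> (\<lambda>t. inner (a t) x - bb t) ` T" by auto
  then have b2: "bdd_above {inner (a t) x - bb t | t. t \<in> T - D}" by (rule bdd_above_mono[OF b1])
  have "{\<bar>inner (a t) x - bb t\<bar> | t. t \<in> D} = (\<lambda>t. \<bar>inner (a t) x - bb t\<bar>) ` D" by auto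
  then have "finite {\<bar>inner (a t) x - bb t\<bar> | t. t \<in> D}" using assms(4) by simp
  then have bdd: "bdd_above ?S" using b2 by simp
  show "\<And>t. t \<in> T - D \<Longrightarrow> inner (a t) x - bb t \<le> fD T (\<lambda>t x. inner (a t) x) bb D x"
    unfolding fD_def by (rule cSup_upper[OF _ bdd]) auto
  show "\<And>t. t \<in> D \<Longrightarrow> \<bar>inner (a t) x - bb t\<bar> \<le> fD T (\<lambda>t x. inner (a t) x) bb D x"
    unfolding fD_def by (rule cSup_upper[OF _ bdd]) auto
qed

lemma fD_lip:
  fixes a :: "'z::metric_space \<Rightarrow> real^'n"
  assumes "T \<noteq> {}" "D \<subseteq> active T (\<lambda>t x. inner (a t) x) bb xb" "xb \<in> feas T a bb"
    "\<And>t. t \<in> T \<Longrightarrow> norm (a t) \<le> M"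
  shows "fD T (\<lambda>t x. inner (a t) x) bb D x \<le> M * norm (x - xb)"
  unfolding fD_def
proof (rule cSup_least)
  show "{inner (a t) x - bb t | t. t \<in> T - D} \<union> {\<bar>inner (a t) x - bb t\<bar> | t. t \<in> D} \<noteq> {}"
    using assms(1) by blast
next
  fix r assume "r \<in> {inner (a t) x - bb t | t. t \<in> T - D} \<union> {\<bar>inner (a t) x - bb t\<bar> | t. t \<in> D}"
  then consider t where "t \<in> T" "t \<notin> D" "r = inner (a t) x - bb t"
    | t where "t \<in> D" "r = \<bar>inner (a t) x - bb t\<bar>" by blast
  then show "r \<le> M * norm (x - xb)"
  proof cases
    case (1 t)
    have f: "inner (a t) xb \<le> bb t" using assms(3) 1 by (simp add: feas_def)
    have eq: "inner (a t) x - bb t = inner (a t) (x - xb) + (inner (a t) xb - bb t)"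
      by (simp add: inner_diff_right)
    have cs: "\<bar>inner (a t) (x - xb)\<bar> \<le> M * norm (x - xb)"
      by (meson Cauchy_Schwarz_ineq2 assms(4) mult_right_mono norm_ge_zero order_trans 1(1))
    show ?thesis using eq f cs 1 by auto
  next
    case (2 t)
    have t: "t \<in> T" and dd: "inner (a t) xb = bb t" using assms(2) 2 unfolding active_def by auto
    have eq: "inner (a t) x - bb t = inner (a t) (x - xb) + (inner (a t) xb - bb t)"
      by (simp add: inner_diff_right)
    have cs: "\<bar>inner (a t) (x - xb)\<bar> \<le> M * norm (x - xb)"
      by (meson Cauchy_Schwarz_ineq2 assms(4) mult_right_mono norm_ge_zero order_trans t)
    show ?thesis using eq dd cs 2 by auto
  qed
qed


theorem corollary4p12:
  fixes T :: "'z::metric_space set" and a :: "'z \<Rightarrow> real^'n"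
    and q :: real and cb :: "real^'n" and bb :: "'z \<Rightarrow> real" and xb :: "real^'n"
  assumes "compact T" and "T \<noteq> UNIV" and "continuous_on T a"
    and "0 < q" and "q \<le> 1"
    and "continuous_on T bb"
    and "optS T a cb bb = {xb}"
    and "slater T a bb"
  shows "clm q (pardist T) (ParSp T) (\<lambda>p. optS T a (fst p) (snd p)) (cb, bb) xb
           \<le> clm q (supdist T) (CT T) (optS T a cb) bb xb
       \<and> clm q (supdist T) (CT T) (optS T a cb) bb xb
           \<le> (INF D\<in>Kfam T (\<lambda>t x. inner (a t) x) (\<lambda>x. 0) cb bb xb.
                SUP \<delta>\<in>{0<..}. INF x\<in>{x. dist x xb < \<delta> \<and> 0 < fD T (\<lambda>t x. inner (a t) x) bb D x}.
                  ereal (fD T (\<lambda>t x. inner (a t) x) bb D x powr (q - 1))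
                  * dist0 (subdiff (fD T (\<lambda>t x. inner (a t) x) bb D) x))"
proof
  have Tne: "T \<noteq> {}" using T_nonempty[OF assms(7)] .
  have xbf: "xb \<in> feas T a bb" using assms(7) unfolding optS_def by blast
  show "clm q (pardist T) (ParSp T) (\<lambda>p. optS T a (fst p) (snd p)) (cb, bb) xb
           \<le> clm q (supdist T) (CT T) (optS T a cb) bb xb"
    unfolding clm_def
  proof (rule SUP_mono)
    fix \<delta> :: real assume d: "\<delta> \<in> {0<..}"
    show "\<exists>m\<in>{0<..}. (INF p\<in>{(y,x). y \<in> ParSp T \<and> x \<in> optS T a (fst y) (snd y) \<and> pardist T y (cb, bb) < \<delta> \<and> dist x xb < \<delta>}.
        calm_ratio (pardist T (fst p) (cb, bb) powr q) (infdist (snd p) (optS T a (fst (cb, bb)) (snd (cb, bb)))))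
      \<le> (INF p\<in>{(y,x). y \<in> CT T \<and> x \<in> optS T a cb y \<and> supdist T y bb < m \<and> dist x xb < m}.
        calm_ratio (supdist T (fst p) bb powr q) (infdist (snd p) (optS T a cb bb)))"
    proof (intro bexI[OF _ d] INF_mono)
      fix p assume p: "p \<in> {(y,x). y \<in> CT T \<and> x \<in> optS T a cb y \<and> supdist T y bb < \<delta> \<and> dist x xb < \<delta>}"
      then obtain y x where px: "p = (y, x)" and y: "y \<in> CT T" and rest: "x \<in> optS T a cb y" "supdist T y bb < \<delta>" "dist x xb < \<delta>"
        by blast
      have nn: "0 \<le> supdist T y bb"
        using supdist_nonneg[OF assms(1) _ assms(6)] y by (simp add: CT_def)
      have pd: "pardist T (cb, y) (cb, bb) = supdist T y bb"
        using nn by (simp add: pardist_def)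
      show "\<exists>m\<in>{(y,x). y \<in> ParSp T \<and> x \<in> optS T a (fst y) (snd y) \<and> pardist T y (cb, bb) < \<delta> \<and> dist x xb < \<delta>}.
        calm_ratio (pardist T (fst m) (cb, bb) powr q) (infdist (snd m) (optS T a (fst (cb, bb)) (snd (cb, bb))))
        \<le> calm_ratio (supdist T (fst p) bb powr q) (infdist (snd p) (optS T a cb bb))"
        using y rest pd px by (intro bexI[of _ "((cb, y), x)"]) (auto simp: ParSp_def CT_def)
    qed
  qed
  show "clm q (supdist T) (CT T) (optS T a cb) bb xb
           \<le> (INF D\<in>Kfam T (\<lambda>t x. inner (a t) x) (\<lambda>x. 0) cb bb xb.
                SUP \<delta>\<in>{0<..}. INF x\<in>{x. dist x xb < \<delta> \<and> 0 < fD T (\<lambda>t x. inner (a t) x) bb D x}.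
                  ereal (fD T (\<lambda>t x. inner (a t) x) bb D x powr (q - 1))
                  * dist0 (subdiff (fD T (\<lambda>t x. inner (a t) x) bb D) x))"
  proof (rule INF_greatest)
    fix D assume DK: "D \<in> Kfam T (\<lambda>t x. inner (a t) x) (\<lambda>x. 0) cb bb xb"
    let ?f = "fD T (\<lambda>t x. inner (a t) x) bb D"
    have Dact: "D \<subseteq> active T (\<lambda>t x. inner (a t) x) bb xb" and Dfin: "finite D"
      using DK unfolding Kfam_def by auto
    have DT: "D \<subseteq> T" using Dact unfolding active_def by auto
    obtain u where u: "u \<in> subdiff (\<lambda>x. 0) xb"
      and uc: "- (u + cb) \<in> convex_cone hull (\<Union>t\<in>D. subdiff (\<lambda>x. inner (a t) x) xb)"
      using DK unfolding Kfam_def by blast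
    have u0: "u = 0"
    proof -
      have "0 + inner u ((xb + u) - xb) \<le> 0" using u unfolding subdiff_def by blast
      then show ?thesis by (metis add_0 inner_gt_zero_iff not_le add_diff_cancel_left')
    qed
    have "(\<Union>t\<in>D. subdiff (\<lambda>x. inner (a t) x) xb) \<subseteq> a ` D"
      using subdiff_linear by blast
    then have cbD: "- cb \<in> convex_cone hull (a ` D)"
      using uc u0 hull_mono by fastforce
    obtain M where M: "M > 0" "\<And>t. t \<in> T \<Longrightarrow> norm (a t) \<le> M"
    proof -
      have "bounded (a ` T)" by (intro compact_imp_bounded compact_continuous_image assms(3) assms(1))
      then obtain M where "M > 0" "\<forall>y\<in>a ` T. norm y \<le> M" using bounded_pos by blast
      then show ?thesis using that by auto
    qed
    have lip: "\<And>x. ?f x \<le> M * norm (x - xb)"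
      using fD_lip[OF Tne Dact xbf] M(2) by blast
    have fxb: "?f xb \<le> 0" using lip[of xb] by simp
    show "clm q (supdist T) (CT T) (optS T a cb) bb xb \<le>
       (SUP \<delta>\<in>{0<..}. INF x\<in>{x. dist x xb < \<delta> \<and> 0 < ?f x}.
                  ereal (?f x powr (q - 1)) * dist0 (subdiff ?f x))"
      unfolding clm_def
    proof (rule SUP_least)
      fix \<delta> :: real assume d: "\<delta> \<in> {0<..}"
      define \<delta>' where "\<delta>' = min \<delta> (\<delta> / M)"
      have d': "\<delta>' \<in> {0<..}" using d M by (simp add: \<delta>'_def)
      show "(INF p\<in>{(y,x). y \<in> CT T \<and> x \<in> optS T a cb y \<and> supdist T y bb < \<delta> \<and> dist x xb < \<delta>}.
          calm_ratio (supdist T (fst p) bb powr q) (infdist (snd p) (optS T a cb bb)))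
        \<le> (SUP \<delta>\<in>{0<..}. INF x\<in>{x. dist x xb < \<delta> \<and> 0 < ?f x}.
                  ereal (?f x powr (q - 1)) * dist0 (subdiff ?f x))"
      proof (rule SUP_upper2[OF d'], rule INF_greatest)
        fix x assume x: "x \<in> {x. dist x xb < \<delta>' \<and> 0 < ?f x}"
        define \<alpha> where "\<alpha> = ?f x"
        have ap: "0 < \<alpha>" using x by (simp add: \<alpha>_def)
        have xne: "x \<noteq> xb" using ap fxb \<alpha>_def by auto
        have dpos: "0 < norm (x - xb)" using xne by simp
        have adl: "\<alpha> < \<delta>"
        proof -
          have "\<alpha> \<le> M * norm (x - xb)" using lip \<alpha>_def by simp
          also have "\<dots> < M * \<delta>'" using x M(1) by (simp add: dist_norm)
          also have "\<dots> \<le> M * (\<delta> / M)" using M(1) by (intro mult_left_mono) (auto simp: \<delta>'_def)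
          finally show ?thesis using M(1) by simp
        qed
        define b where "b = (\<lambda>t. max (inner (a t) x) (bb t - \<alpha>))"
        have b1: "\<And>t. t \<in> T - D \<Longrightarrow> inner (a t) x - bb t \<le> \<alpha>"
          using fD_bounds(1)[OF assms(1,3,6) Dfin DT] \<alpha>_def by blast
        have b2: "\<And>t. t \<in> D \<Longrightarrow> \<bar>inner (a t) x - bb t\<bar> \<le> \<alpha>"
          using fD_bounds(2)[OF assms(1,3,6) Dfin DT] \<alpha>_def by blast
        have rle: "\<And>t. t \<in> T \<Longrightarrow> inner (a t) x - bb t \<le> \<alpha>"
          using b1 b2 by (metis Diff_iff abs_ge_self order_trans)
        have bc: "continuous_on T b" unfolding b_def
          by (intro continuous_intros assms)
        have bCT: "b \<in> CT T" using bc by (simp add: CT_def)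
        have xopt: "x \<in> optS T a cb b"
        proof (rule kkt[OF cbD _ DT])
          show "x \<in> feas T a b" by (simp add: feas_def b_def)
          fix t assume "t \<in> D"
          then show "inner (a t) x = b t" using b2[of t] by (auto simp: b_def)
        qed
        have sd: "supdist T b bb \<le> \<alpha>"
        proof (rule supdist_le[OF Tne])
          fix t assume "t \<in> T"
          then show "\<bar>b t - bb t\<bar> \<le> \<alpha>" using rle[of t] ap by (auto simp: b_def)
        qed
        have sd0: "0 \<le> supdist T b bb" using supdist_nonneg[OF assms(1) bc assms(6)] .
        have idist: "infdist x (optS T a cb bb) = norm (x - xb)"
          using assms(7) by (simp add: dist_norm)
        have r1: "calm_ratio (supdist T b bb powr q) (infdist x (optS T a cb bb))
            \<le> ereal (\<alpha> powr q / norm (x - xb))"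
          using dpos idist sd sd0 assms(4)
          by (auto simp: calm_ratio_def intro!: divide_right_mono powr_mono2)
        have eqq: "\<alpha> powr q / norm (x - xb) = \<alpha> powr (q - 1) * (\<alpha> / norm (x - xb))"
          using ap by (simp add: powr_diff)
        have r2: "ereal (\<alpha> / norm (x - xb)) \<le> dist0 (subdiff ?f x)"
          unfolding dist0_def
        proof (rule INF_greatest)
          fix v assume v: "v \<in> subdiff ?f x"
          have "?f x + inner v (xb - x) \<le> ?f xb" using v unfolding subdiff_def by blast
          then have "\<alpha> \<le> inner v (x - xb)" using fxb \<alpha>_def
            by (simp add: inner_diff_right)
          also have "\<dots> \<le> norm v * norm (x - xb)" by (rule norm_cauchy_schwarz)
          finally show "ereal (\<alpha> / norm (x - xb)) \<le> ereal (norm v)"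
            using dpos by (simp add: divide_le_eq)
        qed
        have r3: "ereal (\<alpha> powr q / norm (x - xb)) \<le> ereal (\<alpha> powr (q - 1)) * dist0 (subdiff ?f x)"
          unfolding eqq times_ereal.simps(1)[symmetric]
          by (rule ereal_mult_left_mono[OF r2]) simp
        show "(INF p\<in>{(y,x). y \<in> CT T \<and> x \<in> optS T a cb y \<and> supdist T y bb < \<delta> \<and> dist x xb < \<delta>}.
          calm_ratio (supdist T (fst p) bb powr q) (infdist (snd p) (optS T a cb bb)))
          \<le> ereal (?f x powr (q - 1)) * dist0 (subdiff ?f x)"
        proof (rule INF_lower2)
          show "(b, x) \<in> {(y,x). y \<in> CT T \<and> x \<in> optS T a cb y \<and> supdist T y bb < \<delta> \<and> dist x xb < \<delta>}"
            using bCT xopt sd adl x by (auto simp: \<delta>'_def)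
          show "calm_ratio (supdist T (fst (b, x)) bb powr q) (infdist (snd (b, x)) (optS T a cb bb))
            \<le> ereal (?f x powr (q - 1)) * dist0 (subdiff ?f x)"
            using r1 r3 \<alpha>_def by simp
        qed
      qed
    qed
  qed
qed

end
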